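(* Let $A\in\mathbb K^{n\times n}$ have rank at most $s$, let $G,H\in\mathbb K^{n\times t}$, set $M=A-GH^{T}$ and $r=s+t$. Let $S\subseteq\mathbb K$ be finite. Let $T_1\in\mathbb K^{n\times r}$ and $T_2\in\mathbb K^{r\times n}$ be Toeplitz matrices whose defining entries ($n+r-1$ for each) are chosen independently and uniformly at random from $S$. Let $P=AT_1-G(H^TT_1)$ and $Q=T_2A-(T_2G)H^T$. Then, with probability at least $1-2r/|S|$, the row rank profile of $P$ equals the row rank profile of $M$ and the column rank profile of $Q$ equals the column rank profile of $M$.
   Context: The row rank profile of a matrix $X$ is the increasing sequence of indices $i$ such that row $i$ of $X$ is not in the span of rows $1,\dots,i-1$ of $X$; the column rank profile is defined analogously with columns. A Toeplitz matrix $T$ is one with $T_{i,j}$ depending only on $i-j$; an $n\times r$ Toeplitz matrix is determined by $n+r-1$ entries. *)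

theory Defs
  imports "Jordan_Normal_Form.DL_Rank" "HOL-Probability.Probability_Mass_Function"
begin

definition row_in_prev_span :: "'a::field mat \<Rightarrow> nat \<Rightarrow> bool" where
  "row_in_prev_span X i \<longleftrightarrow>
     (\<exists>c :: nat \<Rightarrow> 'a. \<forall>j < dim_col X. X $$ (i, j) = (\<Sum>k<i. c k * X $$ (k, j)))"

definition row_rank_profile :: "'a::field mat \<Rightarrow> nat list" where
  "row_rank_profile X = filter (\<lambda>i. \<not> row_in_prev_span X i) [0..<dim_row X]"

definition col_rank_profile :: "'a::field mat \<Rightarrow> nat list" where
  "col_rank_profile X = row_rank_profile (transpose_mat X)"

text \<open>The m x k Toeplitz matrix determined by the m+k-1 entries c 0, ..., c (m+k-2):
  entry (i,j) is c (i + (k-1) - j), which depends only on i - j.\<close>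
definition toeplitz_mat :: "nat \<Rightarrow> nat \<Rightarrow> (nat \<Rightarrow> 'a) \<Rightarrow> 'a mat" where
  "toeplitz_mat m k c = Matrix.mat m k (\<lambda>(i, j). c (i + (k - 1) - j))"

end

theory Submission
  imports Defs
begin


definition tw :: "nat \<Rightarrow> nat \<Rightarrow> (nat \<Rightarrow> 'a::field) \<Rightarrow> (nat \<Rightarrow> 'a) \<Rightarrow> nat \<Rightarrow> 'a" where
  "tw n r c w j = (\<Sum>i<n. w i * c (i + (r - 1) - j))"

definition badv :: "nat \<Rightarrow> (nat \<Rightarrow> 'a::field) set \<Rightarrow> nat \<Rightarrow> (nat \<Rightarrow> 'a) \<Rightarrow> bool" where
  "badv n V r c \<longleftrightarrow> (\<exists>w\<in>V. (\<exists>i<n. w i \<noteq> 0) \<and> (\<forall>j<r. tw n r c w j = 0))"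

definition subsp :: "(nat \<Rightarrow> 'a::field) set \<Rightarrow> bool" where
  "subsp V \<longleftrightarrow> (\<forall>v w. v \<in> V \<longrightarrow> w \<in> V \<longrightarrow> (\<lambda>i. v i - w i) \<in> V) \<and> (\<forall>a v. v \<in> V \<longrightarrow> (\<lambda>i. a * v i) \<in> V)"

definition dep :: "nat \<Rightarrow> nat \<Rightarrow> (nat \<Rightarrow> 'a::field) set \<Rightarrow> bool" where
  "dep n p V \<longleftrightarrow> (\<forall>v. (\<forall>k<Suc p. v k \<in> V) \<longrightarrow>
      (\<exists>a. (\<exists>k<Suc p. a k \<noteq> 0) \<and> (\<forall>i<n. (\<Sum>k<Suc p. a k * v k i) = 0)))"

lemma card_one_var:
  assumes "finite S" "finite I" "X \<in> I" "E \<subseteq> PiE I (\<lambda>_. S)"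
    and inj: "\<And>c d. c \<in> E \<Longrightarrow> d \<in> E \<Longrightarrow> (\<And>i. i \<noteq> X \<Longrightarrow> c i = d i) \<Longrightarrow> c X = d X"
  shows "card E * card S \<le> card S ^ card I"
proof -
  let ?f = "\<lambda>c. c(X := undefined)"
  have "inj_on ?f E"
  proof
    fix c d assume "c \<in> E" "d \<in> E" "?f c = ?f d"
    then have "\<And>i. i \<noteq> X \<Longrightarrow> c i = d i" by (metis fun_upd_other)
    with inj[OF \<open>c \<in> E\<close> \<open>d \<in> E\<close>] show "c = d" by (metis ext)
  qed
  moreover have "?f ` E \<subseteq> PiE (I - {X}) (\<lambda>_. S)"
    using assms(4) by (auto simp: PiE_def extensional_def Pi_def)
  ultimately have "card E \<le> card (PiE (I - {X}) (\<lambda>_. S))"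
    by (metis card_image card_mono assms(1,2) finite_Diff finite_PiE)
  also have "\<dots> = card S ^ (card I - 1)"
    using assms(2,3) by (simp add: card_PiE)
  finally have "card E * card S \<le> card S ^ (card I - 1) * card S" by simp
  also have "\<dots> = card S ^ card I"
    using assms(2,3) by (metis card_gt_0_iff empty_iff power_minus_mult)
  finally show ?thesis .
qed

lemma tw_shift: assumes "Suc j < r" shows "tw n (r - 1) c w j = tw n r c w (Suc j)"
proof -
  have "\<And>i. i + (r - 1 - 1) - j = i + (r - 1) - Suc j" using assms by arith
  then show ?thesis unfolding tw_def by simp
qed

lemma tw_diff: "tw n r c (\<lambda>i. v i - a * w i) j = tw n r c v j - a * tw n r c w j"
  unfolding tw_def by (simp add: left_diff_distrib sum_subtractf sum_distrib_left mult.assoc)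

lemma core:
  assumes "finite S" "subsp V" "dep n p V" "p \<le> r" "n + r \<le> N + 1"
  shows "card {c \<in> PiE {..<N} (\<lambda>_. S). badv n V r c} * card S \<le> p * card S ^ N"
  using assms(2-5)
proof (induction p arbitrary: V r)
  case 0
  have "\<not> badv n V r c" for c
  proof
    assume "badv n V r c"
    then obtain w i where w: "w \<in> V" "i < n" "w i \<noteq> 0" unfolding badv_def by blast
    from \<open>dep n 0 V\<close>[unfolded dep_def, rule_format, of "\<lambda>k. w"] w(1)
    obtain a where "a 0 \<noteq> 0" "\<forall>i<n. a 0 * w i = 0" by auto
    with w show False by auto
  qed
  then show ?case by simp
next
  case (Suc p V r)
  let ?\<Omega> = "PiE {..<N} (\<lambda>_. S)"
  have r1: "r \<ge> 1" using Suc by simp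
  show ?case
  proof (cases "\<forall>w\<in>V. \<forall>i<n. w i = 0")
    case True
    then have "\<not> badv n V r c" for c unfolding badv_def by blast
    then show ?thesis by simp
  next
    case False
    define Qs where "Qs = {i. i < n \<and> (\<exists>w\<in>V. w i \<noteq> 0)}"
    define q where "q = Max Qs"
    have finQ: "finite Qs" unfolding Qs_def by simp
    have neQ: "Qs \<noteq> {}" using False unfolding Qs_def by auto
    have "q \<in> Qs" unfolding q_def using finQ neQ by (rule Max_in)
    then have qn: "q < n" and "\<exists>g\<in>V. g q \<noteq> 0" unfolding Qs_def by auto
    then obtain g where g: "g \<in> V" "g q \<noteq> 0" by blast
    have zero_above: "w i = 0" if "w \<in> V" "q < i" "i < n" for w i
    proof (rule ccontr)
      assume "w i \<noteq> 0"
      then have "i \<in> Qs" using that unfolding Qs_def by auto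
      then have "i \<le> q" unfolding q_def using finQ by simp
      with that show False by simp
    qed
    define V' where "V' = {w \<in> V. w q = 0}"
    have sub: "subsp V'" using \<open>subsp V\<close> unfolding subsp_def V'_def by auto
    have dep': "dep n p V'"
      unfolding dep_def
    proof (intro allI impI)
      fix v :: "nat \<Rightarrow> nat \<Rightarrow> 'a" assume v: "\<forall>k<Suc p. v k \<in> V'"
      define v' where "v' = (\<lambda>k. if k < Suc p then v k else g)"
      have vV: "\<forall>k<Suc (Suc p). v' k \<in> V" using v g unfolding v'_def V'_def by auto
      have "\<exists>a. (\<exists>k<Suc (Suc p). a k \<noteq> 0) \<and> (\<forall>i<n. (\<Sum>k<Suc (Suc p). a k * v' k i) = 0)"
        using \<open>dep n (Suc p) V\<close> vV unfolding dep_def by presburger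
      then obtain a where a0: "(\<exists>k<Suc (Suc p). a k \<noteq> 0) \<and> (\<forall>i<n. (\<Sum>k<Suc (Suc p). a k * v' k i) = 0)"
        by (rule exE)
      note a = conjunct1[OF a0] conjunct2[OF a0]
      have sp: "(\<Sum>k<Suc (Suc p). a k * v' k i) = (\<Sum>k<Suc p. a k * v k i) + a (Suc p) * g i" for i
        unfolding v'_def by (simp add: sum.lessThan_Suc[of _ "Suc p"])
      have "(\<Sum>k<Suc p. a k * v k q) = 0"
        by (rule sum.neutral) (use v V'_def in auto)
      moreover have "(\<Sum>k<Suc (Suc p). a k * v' k q) = 0" using a(2) qn by blast
      ultimately have "a (Suc p) * g q = 0" using sp[of q] by simp
      then have aS: "a (Suc p) = 0" using g(2) by simp
      obtain k where k: "k < Suc (Suc p)" "a k \<noteq> 0" using a(1) by blast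
      then have "k < Suc p" using aS by (cases "k = Suc p") auto
      moreover have "\<forall>i<n. (\<Sum>k<Suc p. a k * v k i) = 0"
      proof (intro allI impI)
        fix i assume "i < n"
        then have "(\<Sum>k<Suc (Suc p). a k * v' k i) = 0" using a(2) by blast
        then show "(\<Sum>k<Suc p. a k * v k i) = 0" using sp[of i] aS by simp
      qed
      ultimately show "\<exists>a. (\<exists>k<Suc p. a k \<noteq> 0) \<and> (\<forall>i<n. (\<Sum>k<Suc p. a k * v k i) = 0)"
        using k(2) by blast
    qed
    have IH: "card {c \<in> ?\<Omega>. badv n V' (r - 1) c} * card S \<le> p * card S ^ N"
      using Suc.IH[OF sub dep'] Suc.prems by simp
    define X where "X = q + (r - 1)"
    have XN: "X \<in> {..<N}" using qn r1 Suc.prems unfolding X_def by auto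
    define E where "E = {c \<in> ?\<Omega>. badv n V r c \<and> \<not> badv n V' (r - 1) c}"
    have agree: "tw n r c w j = tw n r d w j"
      if "w \<in> V" "0 < j" "j < r" "\<And>i. i \<noteq> X \<Longrightarrow> c i = d i" for w j c d
      unfolding tw_def
    proof (rule sum.cong[OF refl])
      fix i assume "i \<in> {..<n}"
      show "w i * c (i + (r - 1) - j) = w i * d (i + (r - 1) - j)"
      proof (cases "q < i")
        case True then show ?thesis using zero_above[OF \<open>w \<in> V\<close>] \<open>i \<in> {..<n}\<close> by simp
      next
        case False
        then have "i + (r - 1) - j \<noteq> X" using \<open>0 < j\<close> \<open>j < r\<close> unfolding X_def by linarith
        then show ?thesis using that(4) by simp
      qed
    qed
    have col0: "tw n r c w 0 - tw n r d w 0 = w q * (c X - d X)"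
      if "w \<in> V" "\<And>i. i \<noteq> X \<Longrightarrow> c i = d i" for w c d
    proof -
      let ?f = "\<lambda>i. w i * (c (i + (r - 1)) - d (i + (r - 1)))"
      have "tw n r c w 0 - tw n r d w 0 = (\<Sum>i<n. ?f i)"
        unfolding tw_def by (simp add: sum_subtractf right_diff_distrib)
      also have "\<dots> = ?f q + (\<Sum>i\<in>{..<n} - {q}. ?f i)"
        by (rule sum.remove) (use qn in auto)
      also have "(\<Sum>i\<in>{..<n} - {q}. ?f i) = 0"
      proof (rule sum.neutral, intro ballI)
        fix i assume i: "i \<in> {..<n} - {q}"
        show "?f i = 0"
        proof (cases "q < i")
          case True then show ?thesis using zero_above[OF \<open>w \<in> V\<close>] i by simp
        next
          case False
          then have "i + (r - 1) \<noteq> X" using i unfolding X_def by auto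
          then show ?thesis using that(2) by simp
        qed
      qed
      finally show ?thesis unfolding X_def by simp
    qed
    have Eb: "card E * card S \<le> card S ^ N"
    proof -
      have "card E * card S \<le> card S ^ card {..<N}"
      proof (rule card_one_var[OF \<open>finite S\<close> _ XN])
        show "E \<subseteq> ?\<Omega>" unfolding E_def by auto
      next
        fix c d assume cE: "c \<in> E" and dE: "d \<in> E" and ag: "\<And>i. i \<noteq> X \<Longrightarrow> c i = d i"
        have ag': "\<And>i. i \<noteq> X \<Longrightarrow> d i = c i" using ag by metis
        from cE obtain wc where wc: "wc \<in> V" "\<exists>i<n. wc i \<noteq> 0" "\<forall>j<r. tw n r c wc j = 0"
          and nc: "\<not> badv n V' (r - 1) c" unfolding E_def badv_def by blast
        from dE obtain wd where wd: "wd \<in> V" "\<exists>i<n. wd i \<noteq> 0" "\<forall>j<r. tw n r d wd j = 0"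
          and nd: "\<not> badv n V' (r - 1) d" unfolding E_def badv_def by blast
        have wcq: "wc q \<noteq> 0"
        proof
          assume "wc q = 0"
          then have "wc \<in> V'" using wc(1) unfolding V'_def by simp
          moreover have "\<forall>j<r - 1. tw n (r - 1) c wc j = 0"
            using wc(3) tw_shift by (metis less_diff_conv Suc_eq_plus1)
          ultimately have "badv n V' (r - 1) c" using wc(2) unfolding badv_def by blast
          with nc show False by simp
        qed
        have wdq: "wd q \<noteq> 0"
        proof
          assume "wd q = 0"
          then have "wd \<in> V'" using wd(1) unfolding V'_def by simp
          moreover have "\<forall>j<r - 1. tw n (r - 1) d wd j = 0"
            using wd(3) tw_shift by (metis less_diff_conv Suc_eq_plus1)
          ultimately have "badv n V' (r - 1) d" using wd(2) unfolding badv_def by blast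
          with nd show False by simp
        qed
        define \<alpha> where "\<alpha> = wc q / wd q"
        define w where "w = (\<lambda>i. wc i - \<alpha> * wd i)"
        have wV: "w \<in> V" using \<open>subsp V\<close> wc(1) wd(1) unfolding subsp_def w_def by blast
        have "w q = 0" unfolding w_def \<alpha>_def using wdq by simp
        with wV have wV': "w \<in> V'" unfolding V'_def by simp
        have "\<forall>j<r - 1. tw n (r - 1) c w j = 0"
        proof (intro allI impI)
          fix j assume j: "j < r - 1"
          then have Sj: "Suc j < r" by simp
          have "tw n (r - 1) c w j = tw n r c w (Suc j)" using tw_shift[OF Sj] .
          also have "\<dots> = tw n r c wc (Suc j) - \<alpha> * tw n r c wd (Suc j)"
            unfolding w_def by (rule tw_diff)
          also have "tw n r c wd (Suc j) = tw n r d wd (Suc j)"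
            by (rule agree[OF wd(1) _ Sj ag]) simp
          finally show "tw n (r - 1) c w j = 0" using wc(3) wd(3) Sj by simp
        qed
        with wV' nc have w0: "\<forall>i<n. w i = 0" unfolding badv_def by blast
        have "tw n r d w 0 = 0" unfolding tw_def using w0 by simp
        then have "tw n r d wc 0 = 0" using tw_diff[of n r d wc \<alpha> wd 0] wd(3) r1 unfolding w_def by simp
        moreover have "tw n r c wc 0 = 0" using wc(3) r1 by simp
        ultimately have "wc q * (c X - d X) = 0" using col0[of wc c d, OF wc(1) ag] by simp
        then show "c X = d X" using wcq by simp
      qed simp
      then show ?thesis by simp
    qed
    have sub1: "{c \<in> ?\<Omega>. badv n V r c} \<subseteq> {c \<in> ?\<Omega>. badv n V' (r - 1) c} \<union> E"
      unfolding E_def by blast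
    have fin: "finite ?\<Omega>" using \<open>finite S\<close> by (simp add: finite_PiE)
    have "card {c \<in> ?\<Omega>. badv n V r c} \<le> card ({c \<in> ?\<Omega>. badv n V' (r - 1) c} \<union> E)"
      by (rule card_mono[OF _ sub1]) (use fin in \<open>auto simp: E_def\<close>)
    also have "\<dots> \<le> card {c \<in> ?\<Omega>. badv n V' (r - 1) c} + card E" by (rule card_Un_le)
    finally have "card {c \<in> ?\<Omega>. badv n V r c} * card S
        \<le> (card {c \<in> ?\<Omega>. badv n V' (r - 1) c} + card E) * card S" by (rule mult_right_mono) simp
    also have "\<dots> \<le> p * card S ^ N + card S ^ N" using IH Eb by (simp add: add_mult_distrib)
    finally show ?thesis by simp
  qed
qed



lemma mult_entry: assumes "M \<in> carrier_mat m n" "T \<in> carrier_mat n k" "i < m" "j < k"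
  shows "(M * T) $$ (i, j) = (\<Sum>t<n. M $$ (i, t) * T $$ (t, j))"
  using assms by (simp add: scalar_prod_def atLeast0LessThan)

lemma sum_if_less: fixes f :: "nat \<Rightarrow> 'a::field" shows "i \<le> m \<Longrightarrow> (\<Sum>l<m. (if l < i then c l else 0) * f l) = (\<Sum>l<i. c l * f l)"
proof -
  assume "i \<le> m"
  have "(\<Sum>l<m. (if l < i then c l else 0) * f l) = (\<Sum>l<m. (if l < i then c l * f l else 0))"
    by (rule sum.cong) auto
  also have "\<dots> = (\<Sum>l\<in>{l\<in>{..<m}. l < i}. c l * f l)" by (rule sum.inter_filter[symmetric]) simp
  also have "{l\<in>{..<m}. l < i} = {..<i}" using \<open>i \<le> m\<close> by auto
  finally show ?thesis .
qed

lemma sum_delta_nat: fixes f :: "nat \<Rightarrow> 'a::field" shows "i < m \<Longrightarrow> (\<Sum>l<m. (if l = i then 1 else 0) * f l) = f i"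
proof -
  assume "i < m"
  have "(\<Sum>l<m. (if l = i then 1 else 0) * f l) = (\<Sum>l<m. if l = i then f l else 0)"
    by (rule sum.cong) auto
  also have "\<dots> = f i" using \<open>i < m\<close> by (simp add: sum.delta)
  finally show ?thesis .
qed

lemma row_profile_mult:
  fixes M :: "'a::field mat"
  assumes M: "M \<in> carrier_mat m n" and T: "T \<in> carrier_mat n k"
    and inj: "\<And>y. (\<forall>j<k. (\<Sum>t<n. (\<Sum>l<m. y l * M $$ (l, t)) * T $$ (t, j)) = 0)
               \<Longrightarrow> (\<forall>t<n. (\<Sum>l<m. y l * M $$ (l, t)) = 0)"
  shows "row_rank_profile (M * T) = row_rank_profile M"
proof -
  have MT: "M * T \<in> carrier_mat m k" using M T by simp
  have eq: "row_in_prev_span (M * T) i \<longleftrightarrow> row_in_prev_span M i" if im: "i < m" for i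
  proof
    assume "row_in_prev_span M i"
    then obtain c where c: "\<forall>t<n. M $$ (i, t) = (\<Sum>l<i. c l * M $$ (l, t))"
      unfolding row_in_prev_span_def using M by auto
    have "(M * T) $$ (i, j) = (\<Sum>l<i. c l * (M * T) $$ (l, j))" if j: "j < k" for j
    proof -
      have "(M * T) $$ (i, j) = (\<Sum>t<n. M $$ (i, t) * T $$ (t, j))" by (rule mult_entry[OF M T im j])
      also have "\<dots> = (\<Sum>t<n. (\<Sum>l<i. c l * M $$ (l, t)) * T $$ (t, j))"
        using c by (intro sum.cong) auto
      also have "\<dots> = (\<Sum>l<i. c l * (\<Sum>t<n. M $$ (l, t) * T $$ (t, j)))"
        by (simp add: sum_distrib_left sum_distrib_right mult.assoc sum.swap[of _ "{..<n}"])
      also have "\<dots> = (\<Sum>l<i. c l * (M * T) $$ (l, j))"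
        using mult_entry[OF M T _ j] im by (intro sum.cong) auto
      finally show ?thesis .
    qed
    then show "row_in_prev_span (M * T) i" unfolding row_in_prev_span_def using MT T by auto
  next
    assume "row_in_prev_span (M * T) i"
    then obtain c where c: "\<forall>j<k. (M * T) $$ (i, j) = (\<Sum>l<i. c l * (M * T) $$ (l, j))"
      unfolding row_in_prev_span_def using MT T by auto
    define y where "y = (\<lambda>l. (if l = i then 1 else 0) - (if l < i then c l else 0))"
    have ysum: "(\<Sum>l<m. y l * f l) = f i - (\<Sum>l<i. c l * f l)" for f :: "nat \<Rightarrow> 'a"
      unfolding y_def left_diff_distrib sum_subtractf
      using sum_delta_nat[OF im] sum_if_less[of i m c f] im by simp
    have "\<forall>j<k. (\<Sum>t<n. (\<Sum>l<m. y l * M $$ (l, t)) * T $$ (t, j)) = 0"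
    proof (intro allI impI)
      fix j assume j: "j < k"
      have "(\<Sum>t<n. (\<Sum>l<m. y l * M $$ (l, t)) * T $$ (t, j))
          = (\<Sum>l<m. y l * (\<Sum>t<n. M $$ (l, t) * T $$ (t, j)))"
        by (simp add: sum_distrib_left sum_distrib_right mult.assoc sum.swap[of _ "{..<n}"])
      also have "\<dots> = (\<Sum>t<n. M $$ (i, t) * T $$ (t, j)) - (\<Sum>l<i. c l * (\<Sum>t<n. M $$ (l, t) * T $$ (t, j)))"
        by (rule ysum)
      also have "\<dots> = (M * T) $$ (i, j) - (\<Sum>l<i. c l * (M * T) $$ (l, j))"
        using mult_entry[OF M T _ j] im by (auto intro!: sum.cong)
      finally show "(\<Sum>t<n. (\<Sum>l<m. y l * M $$ (l, t)) * T $$ (t, j)) = 0" using c j by simp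
    qed
    from inj[OF this] have "\<forall>t<n. M $$ (i, t) - (\<Sum>l<i. c l * M $$ (l, t)) = 0"
      using ysum by simp
    then show "row_in_prev_span M i" unfolding row_in_prev_span_def using M by auto
  qed
  show ?thesis unfolding row_rank_profile_def using M MT eq by (auto intro!: filter_cong)
qed

lemma dep_of_span:
  fixes e :: "nat \<Rightarrow> nat \<Rightarrow> 'a::field"
  assumes mp: "m \<le> p" and sp: "\<And>w. w \<in> V \<Longrightarrow> \<exists>z. \<forall>i<n. w i = (\<Sum>l<m. z l * e l i)"
  shows "dep n p V"
  unfolding dep_def
proof (intro allI impI)
  fix v :: "nat \<Rightarrow> nat \<Rightarrow> 'a" assume v: "\<forall>k<Suc p. v k \<in> V"
  have "\<forall>k. \<exists>z. k < Suc p \<longrightarrow> (\<forall>i<n. v k i = (\<Sum>l<m. z l * e l i))" using v sp by blast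
  then obtain Z where Z: "\<forall>k. k < Suc p \<longrightarrow> (\<forall>i<n. v k i = (\<Sum>l<m. Z k l * e l i))"
    by (rule choice[THEN exE])
  define Zm where "Zm = mat\<^sub>r (Suc p) (Suc p) (\<lambda>l. if l = p then 0\<^sub>v (Suc p) else Matrix.vec (Suc p) (\<lambda>k. if l < m then Z k l else 0))"
  have Zc: "Zm \<in> carrier_mat (Suc p) (Suc p)" unfolding Zm_def by simp
  have "Determinant.det Zm = 0" unfolding Zm_def by (rule Determinant.det_row_0[of p "Suc p" "\<lambda>l. Matrix.vec (Suc p) (\<lambda>k. if l < m then Z k l else 0)"]) auto
  with det_0_iff_vec_prod_zero_field[OF Zc] obtain x where
    x: "x \<in> carrier_vec (Suc p)" "x \<noteq> 0\<^sub>v (Suc p)" "Zm *\<^sub>v x = 0\<^sub>v (Suc p)" by blast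
  have nz: "\<exists>k<Suc p. x $ k \<noteq> 0"
  proof (rule ccontr)
    assume "\<not> ?thesis"
    then have "x = 0\<^sub>v (Suc p)" using x(1) by (intro eq_vecI) auto
    with x(2) show False by simp
  qed
  have kz: "(\<Sum>k<Suc p. x $ k * Z k l) = 0" if l: "l < m" for l
  proof -
    have lp: "l < Suc p" "l \<noteq> p" using l mp by auto
    have "(Zm *\<^sub>v x) $ l = 0" using x(3) lp by simp
    moreover have "(Zm *\<^sub>v x) $ l = (\<Sum>k<Suc p. Z k l * x $ k)"
      using lp l x(1) unfolding Zm_def by (simp add: scalar_prod_def atLeast0LessThan)
    ultimately show ?thesis by (simp add: mult.commute)
  qed
  have "\<forall>i<n. (\<Sum>k<Suc p. x $ k * v k i) = 0"
  proof (intro allI impI)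
    fix i assume i: "i < n"
    have "(\<Sum>k<Suc p. x $ k * v k i) = (\<Sum>k<Suc p. x $ k * (\<Sum>l<m. Z k l * e l i))"
      using Z i by (intro sum.cong) auto
    also have "\<dots> = (\<Sum>l<m. (\<Sum>k<Suc p. x $ k * Z k l) * e l i)"
      by (simp only: sum_distrib_left sum_distrib_right mult.assoc, rule sum.swap)
    also have "\<dots> = 0" using kz by simp
    finally show "(\<Sum>k<Suc p. x $ k * v k i) = 0" .
  qed
  with nz show "\<exists>a. (\<exists>k<Suc p. a k \<noteq> 0) \<and> (\<forall>i<n. (\<Sum>k<Suc p. a k * v k i) = 0)" by blast
qed

definition rowsp :: "'a::field mat \<Rightarrow> (nat \<Rightarrow> 'a) set" where
  "rowsp M = {w. \<exists>y. w = (\<lambda>t. \<Sum>l<dim_row M. y l * M $$ (l, t))}"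

lemma rowsp_subsp: "subsp (rowsp M)"
  unfolding subsp_def rowsp_def
proof (intro conjI allI impI)
  fix v w assume "v \<in> {w. \<exists>y. w = (\<lambda>t. \<Sum>l<dim_row M. y l * M $$ (l, t))}"
    "w \<in> {w. \<exists>y. w = (\<lambda>t. \<Sum>l<dim_row M. y l * M $$ (l, t))}"
  then obtain y y' where "v = (\<lambda>t. \<Sum>l<dim_row M. y l * M $$ (l, t))" "w = (\<lambda>t. \<Sum>l<dim_row M. y' l * M $$ (l, t))" by auto
  then have eq: "(\<lambda>i. v i - w i) = (\<lambda>t. \<Sum>l<dim_row M. (y l - y' l) * M $$ (l, t))"
    by (simp add: left_diff_distrib sum_subtractf)
  show "(\<lambda>i. v i - w i) \<in> {w. \<exists>y. w = (\<lambda>t. \<Sum>l<dim_row M. y l * M $$ (l, t))}"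
    unfolding mem_Collect_eq by (rule exI[where x="\<lambda>l. y l - y' l"], rule eq)
next
  fix a v assume "v \<in> {w. \<exists>y. w = (\<lambda>t. \<Sum>l<dim_row M. y l * M $$ (l, t))}"
  then obtain y where "v = (\<lambda>t. \<Sum>l<dim_row M. y l * M $$ (l, t))" by auto
  then have eq: "(\<lambda>i. a * v i) = (\<lambda>t. \<Sum>l<dim_row M. (a * y l) * M $$ (l, t))"
    by (simp add: sum_distrib_left mult.assoc)
  show "(\<lambda>i. a * v i) \<in> {w. \<exists>y. w = (\<lambda>t. \<Sum>l<dim_row M. y l * M $$ (l, t))}"
    unfolding mem_Collect_eq by (rule exI[where x="\<lambda>l. a * y l"], rule eq)
qed

lemma rowsp_span:
  assumes "dim_row M = n" and fac: "\<And>i j. i < n \<Longrightarrow> j < n \<Longrightarrow> M $$ (i, j) = (\<Sum>l<R. F l i * E l j)"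
    and "w \<in> rowsp M"
  shows "\<exists>z. \<forall>t<n. w t = (\<Sum>l<R. z l * E l t)"
proof -
  obtain y where w: "w = (\<lambda>t. \<Sum>i<n. y i * M $$ (i, t))" using assms(1,3) unfolding rowsp_def by auto
  have "\<forall>t<n. w t = (\<Sum>l<R. (\<Sum>i<n. y i * F l i) * E l t)"
  proof (intro allI impI)
    fix t assume t: "t < n"
    have "w t = (\<Sum>i<n. y i * (\<Sum>l<R. F l i * E l t))" unfolding w using fac t by (intro sum.cong) auto
    also have "\<dots> = (\<Sum>l<R. (\<Sum>i<n. y i * F l i) * E l t)"
      by (simp only: sum_distrib_left sum_distrib_right mult.assoc, rule sum.swap)
    finally show "w t = (\<Sum>l<R. (\<Sum>i<n. y i * F l i) * E l t)" .
  qed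
  then show ?thesis by (rule exI[where x="\<lambda>l. \<Sum>i<n. y i * F l i"])
qed

lemma good_inj:
  fixes M :: "'a::field mat"
  assumes M: "M \<in> carrier_mat m n" and nb: "\<not> badv n (rowsp M) k c"
  shows "\<And>y. (\<forall>j<k. (\<Sum>t<n. (\<Sum>l<m. y l * M $$ (l, t)) * toeplitz_mat n k c $$ (t, j)) = 0)
               \<Longrightarrow> (\<forall>t<n. (\<Sum>l<m. y l * M $$ (l, t)) = 0)"
proof -
  fix y assume h: "\<forall>j<k. (\<Sum>t<n. (\<Sum>l<m. y l * M $$ (l, t)) * toeplitz_mat n k c $$ (t, j)) = 0"
  define w where "w = (\<lambda>t. \<Sum>l<m. y l * M $$ (l, t))"
  have wV: "w \<in> rowsp M" using M unfolding rowsp_def w_def by auto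
  have "\<forall>j<k. tw n k c w j = 0"
  proof (intro allI impI)
    fix j assume j: "j < k"
    have "tw n k c w j = (\<Sum>t<n. w t * toeplitz_mat n k c $$ (t, j))"
      unfolding tw_def toeplitz_mat_def using j by (intro sum.cong) auto
    then show "tw n k c w j = 0" using h j unfolding w_def by simp
  qed
  with nb wV have "\<not> (\<exists>i<n. w i \<noteq> 0)" unfolding badv_def by blast
  then show "\<forall>t<n. (\<Sum>l<m. y l * M $$ (l, t)) = 0" unfolding w_def by auto
qed



lemma sum_set_nth: "distinct us \<Longrightarrow> (\<Sum>x\<in>set us. g x) = (\<Sum>l<length us. g (us ! l))"
proof -
  assume d: "distinct us"
  have "set us = (\<lambda>l. us ! l) ` {..<length us}" by (auto simp: in_set_conv_nth)
  moreover have "inj_on (\<lambda>l. us ! l) {..<length us}" using d by (simp add: inj_on_def nth_eq_iff_index_eq)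
  ultimately show ?thesis by (simp add: sum.reindex)
qed

lemma (in vec_space) rank_fact:
  assumes A: "A \<in> carrier_mat n nc"
  shows "\<exists>m b C. m \<le> rank A \<and> (\<forall>i<n. \<forall>j<nc. A $$ (i, j) = (\<Sum>l<m. b l i * C l j))"
proof -
  obtain U where max: "maximal U (\<lambda>T. T \<subseteq> set (cols A) \<and> lin_indpt T)"
    using maximal_exists[of "(\<lambda>T. T \<subseteq> set (cols A) \<and> lin_indpt T)" "card (set (cols A))" "{}"]
    by (meson List.finite_set card_mono empty_iff empty_subsetI finite_lin_indpt2 rev_finite_subset)
  have rk: "rank A = card U" by (rule rank_card_indpt[OF A max])
  have UA: "U \<subseteq> set (cols A)" and li: "lin_indpt U" using max unfolding maximal_def by auto
  have Uc: "U \<subseteq> carrier_vec n" using UA A cols_dim by blast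
  have finU: "finite U" using UA finite_subset by blast
  have inspan: "col A j \<in> span U" if j: "j < nc" for j
  proof -
    have cA: "col A j \<in> set (cols A)" using j A by (simp add: cols_def)
    have cc: "col A j \<in> carrier_vec n" using col_dim[of A j] A by simp
    show ?thesis
    proof (cases "col A j \<in> U")
      case True
      then show ?thesis using in_own_span[OF Uc] by blast
    next
      case False
      have "\<not> lin_indpt (U \<union> {col A j})"
      proof
        assume "lin_indpt (U \<union> {col A j})"
        then have "U \<union> {col A j} = U" using max cA UA unfolding maximal_def by blast
        with False show False by blast
      qed
      then show ?thesis using lin_dep_iff_in_span[OF Uc li cc False] by simp
    qed
  qed
  have "\<forall>j. \<exists>\<beta>. j < nc \<longrightarrow> (\<forall>i<n. A $$ (i, j) = (\<Sum>x\<in>U. \<beta> x * x $ i))"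
  proof (intro allI)
    fix j
    show "\<exists>\<beta>. j < nc \<longrightarrow> (\<forall>i<n. A $$ (i, j) = (\<Sum>x\<in>U. \<beta> x * x $ i))"
    proof (cases "j < nc")
      case True
      obtain a Aa where aA: "col A j = lincomb a Aa" "finite Aa" "Aa \<subseteq> U"
        using in_spanE[OF inspan[OF True]] by blast
      have h: "\<forall>i<n. A $$ (i, j) = (\<Sum>x\<in>U. (if x \<in> Aa then a x else 0) * x $ i)"
      proof (intro allI impI)
        fix i assume i: "i < n"
        have "A $$ (i, j) = col A j $ i" using A i True by simp
        also have "\<dots> = (\<Sum>x\<in>Aa. a x * x $ i)" unfolding aA(1)
          by (rule lincomb_index[OF i]) (use aA Uc in auto)
        also have "\<dots> = (\<Sum>x\<in>U \<inter> Aa. a x * x $ i)"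
          by (simp only: Int_absorb1[OF aA(3)])
        also have "\<dots> = (\<Sum>x\<in>U. (if x \<in> Aa then a x * x $ i else 0))"
          by (rule sum.inter_restrict[OF finU])
        also have "\<dots> = (\<Sum>x\<in>U. (if x \<in> Aa then a x else 0) * x $ i)"
          by (rule sum.cong) auto
        finally show "A $$ (i, j) = (\<Sum>x\<in>U. (if x \<in> Aa then a x else 0) * x $ i)" .
      qed
      show ?thesis
        apply (rule exI[where x="\<lambda>x. if x \<in> Aa then a x else 0"])
        apply (rule impI)
        apply (rule h)
        done
    qed simp
  qed
  then obtain \<beta> where \<beta>: "\<forall>j. j < nc \<longrightarrow> (\<forall>i<n. A $$ (i, j) = (\<Sum>x\<in>U. \<beta> j x * x $ i))"
    by (rule choice[THEN exE])
  obtain us where us: "set us = U" "distinct us" using finite_distinct_list[OF finU] by blast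
  have len: "length us = card U" using us distinct_card by fastforce
  have eq2: "\<forall>i<n. \<forall>j<nc. A $$ (i, j) = (\<Sum>l<length us. (us ! l) $ i * \<beta> j (us ! l))"
  proof (intro allI impI)
    fix i j assume i: "i < n" and j: "j < nc"
    have "A $$ (i, j) = (\<Sum>x\<in>U. \<beta> j x * x $ i)" using \<beta> i j by blast
    also have "\<dots> = (\<Sum>l<length us. \<beta> j (us ! l) * (us ! l) $ i)"
      unfolding us(1)[symmetric] by (rule sum_set_nth[OF us(2)])
    also have "\<dots> = (\<Sum>l<length us. (us ! l) $ i * \<beta> j (us ! l))"
      by (rule sum.cong) (simp_all add: mult.commute)
    finally show "A $$ (i, j) = (\<Sum>l<length us. (us ! l) $ i * \<beta> j (us ! l))" .
  qed
  show ?thesis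
    apply (rule exI[where x="length us"], rule exI[where x="\<lambda>l i. (us ! l) $ i"], rule exI[where x="\<lambda>l j. \<beta> j (us ! l)"])
    apply (rule conjI)
     apply (simp add: rk len)
    apply (rule eq2)
    done
qed



lemma sum_split_add: fixes f :: "nat \<Rightarrow> 'b::comm_monoid_add" and m t :: nat shows "(\<Sum>l<m + t. f l) = (\<Sum>l<m. f l) + (\<Sum>u<t. f (m + u))"
  by (induction t) (auto simp: add.assoc)

lemma toeplitz_carrier[simp]: "toeplitz_mat m k c \<in> carrier_mat m k"
  unfolding toeplitz_mat_def by simp

theorem mainTheorem4:
  fixes A G H :: "'a::field mat" and n s t r :: nat and S :: "'a set"
  assumes "A \<in> carrier_mat n n"
    and "vec_space.rank n A \<le> s"
    and "G \<in> carrier_mat n t" and "H \<in> carrier_mat n t"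
    and "r = s + t"
    and "finite S" and "S \<noteq> {}"
  shows "measure_pmf.prob
           (pmf_of_set ((PiE {..<n + r - 1} (\<lambda>_. S)) \<times> (PiE {..<n + r - 1} (\<lambda>_. S))))
           {(c1, c2). let T1 = toeplitz_mat n r c1; T2 = toeplitz_mat r n c2;
                          M = A - G * transpose_mat H;
                          P = A * T1 - G * (transpose_mat H * T1);
                          Q = T2 * A - (T2 * G) * transpose_mat H
                      in row_rank_profile P = row_rank_profile M
                         \<and> col_rank_profile Q = col_rank_profile M}
         \<ge> 1 - 2 * real r / real (card S)"
proof -
  note Ac = assms(1) and Gc = assms(3) and Hc = assms(4)
  define N where "N = n + r - 1"
  define \<Omega> where "\<Omega> = PiE {..<N} (\<lambda>_. S)"
  obtain mb b C where mb: "mb \<le> vec_space.rank n A"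
    and facA: "\<forall>i<n. \<forall>j<n. A $$ (i, j) = (\<Sum>l<mb. b l i * C l j)"
    using vec_space.rank_fact[OF Ac] by blast
  have mbs: "mb + t \<le> r" using mb assms(2,5) by simp
  define M where "M = A - G * transpose_mat H"
  have GH: "G * transpose_mat H \<in> carrier_mat n n" using Gc Hc by simp
  have Mc: "M \<in> carrier_mat n n" unfolding M_def using minus_carrier_mat[OF GH] .
  have HTc: "transpose_mat H \<in> carrier_mat t n" using Hc by simp
  have MTc: "transpose_mat M \<in> carrier_mat n n" using Mc by simp
  define F where "F = (\<lambda>l i. if l < mb then b l i else - G $$ (i, l - mb))"
  define E where "E = (\<lambda>l j. if l < mb then C l j else H $$ (j, l - mb))"
  have facM: "M $$ (i, j) = (\<Sum>l<mb + t. F l i * E l j)" if ij: "i < n" "j < n" for i j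
  proof -
    have "(G * transpose_mat H) $$ (i, j) = (\<Sum>u<t. G $$ (i, u) * H $$ (j, u))"
      using mult_entry[of G n t "transpose_mat H" n i j] Gc Hc ij by simp
    then have "M $$ (i, j) = (\<Sum>l<mb. b l i * C l j) - (\<Sum>u<t. G $$ (i, u) * H $$ (j, u))"
      unfolding M_def using Ac GH ij facA by (subst index_minus_mat(1)) (auto simp: carrier_matD)
    also have "\<dots> = (\<Sum>l<mb + t. F l i * E l j)"
      unfolding sum_split_add F_def E_def by (simp add: sum_negf)
    finally show ?thesis .
  qed
  have facMT: "transpose_mat M $$ (i, j) = (\<Sum>l<mb + t. E l i * F l j)" if ij: "i < n" "j < n" for i j
    using facM[OF ij(2,1)] Mc ij by (simp add: mult.commute)
  define V1 where "V1 = rowsp M"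
  define V2 where "V2 = rowsp (transpose_mat M)"
  have dep1: "dep n r V1" unfolding V1_def
    by (rule dep_of_span[OF mbs]) (rule rowsp_span[where R="mb + t" and F=F and E=E], use Mc facM in auto)
  have dep2: "dep n r V2" unfolding V2_def
    by (rule dep_of_span[OF mbs]) (rule rowsp_span[where R="mb + t" and F=E and E=F], use Mc facMT in auto)
  have NN: "n + r \<le> N + 1" unfolding N_def by simp
  define B1 where "B1 = {c \<in> \<Omega>. badv n V1 r c}"
  define B2 where "B2 = {c \<in> \<Omega>. badv n V2 r c}"
  have cB1: "card B1 * card S \<le> r * card S ^ N" unfolding B1_def \<Omega>_def
    by (rule core[OF assms(6) _ dep1 order_refl NN]) (simp add: V1_def rowsp_subsp)
  have cB2: "card B2 * card S \<le> r * card S ^ N" unfolding B2_def \<Omega>_def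
    by (rule core[OF assms(6) _ dep2 order_refl NN]) (simp add: V2_def rowsp_subsp)
  define rv where "rv = (\<lambda>c::nat \<Rightarrow> 'a. \<lambda>k. if k < N then c (N - 1 - k) else undefined)"
  have rvO: "rv c \<in> \<Omega>" if "c \<in> \<Omega>" for c
    using that unfolding rv_def \<Omega>_def by (auto simp: PiE_def extensional_def Pi_def)
  have rvrv: "rv (rv c) = c" if "c \<in> \<Omega>" for c
  proof
    fix k show "rv (rv c) k = c k"
      using that unfolding rv_def \<Omega>_def by (auto simp: PiE_def extensional_def)
  qed
  define B2' where "B2' = {c \<in> \<Omega>. badv n V2 r (rv c)}"
  have "rv ` B2' = B2"
  proof
    show "rv ` B2' \<subseteq> B2" unfolding B2'_def B2_def using rvO by auto
    show "B2 \<subseteq> rv ` B2'"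
    proof
      fix c assume "c \<in> B2"
      then have "rv c \<in> B2'" "rv (rv c) = c" unfolding B2'_def B2_def using rvO rvrv by auto
      then show "c \<in> rv ` B2'" by (metis image_eqI)
    qed
  qed
  moreover have "inj_on rv B2'" unfolding B2'_def by (rule inj_on_inverseI[of _ rv]) (use rvrv in auto)
  ultimately have cB2': "card B2' = card B2" by (metis card_image)
  have rowgood: "row_rank_profile (A * toeplitz_mat n r c1 - G * (transpose_mat H * toeplitz_mat n r c1))
      = row_rank_profile M" if nb: "\<not> badv n V1 r c1" for c1
  proof -
    let ?T = "toeplitz_mat n r c1"
    have Tc: "?T \<in> carrier_mat n r" by simp
    have "A * ?T - G * (transpose_mat H * ?T) = M * ?T"
      unfolding M_def assoc_mult_mat[symmetric, OF Gc HTc Tc] minus_mult_distrib_mat[OF Ac GH Tc] ..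
    also have "row_rank_profile (M * ?T) = row_rank_profile M"
      by (rule row_profile_mult[OF Mc toeplitz_carrier good_inj[OF Mc nb[unfolded V1_def]]])
    finally show ?thesis .
  qed
  have colgood: "col_rank_profile (toeplitz_mat r n c2 * A - (toeplitz_mat r n c2 * G) * transpose_mat H)
      = col_rank_profile M" if nb: "\<not> badv n V2 r (rv c2)" for c2
  proof -
    let ?T = "toeplitz_mat r n c2"
    have Tc: "?T \<in> carrier_mat r n" by simp
    have "?T * A - (?T * G) * transpose_mat H = ?T * M"
      unfolding M_def assoc_mult_mat[OF Tc Gc HTc] mult_minus_distrib_mat[OF Tc Ac GH] ..
    moreover have "transpose_mat (?T * M) = transpose_mat M * transpose_mat ?T"
      using transpose_mult[OF Tc Mc] .
    moreover have "transpose_mat ?T = toeplitz_mat n r (rv c2)"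
    proof (rule eq_matI)
      fix i j assume ij: "i < dim_row (toeplitz_mat n r (rv c2))" "j < dim_col (toeplitz_mat n r (rv c2))"
      then have i: "i < n" and j: "j < r" by (simp_all add: toeplitz_mat_def)
      have "i + (r - 1) - j < N" "N - 1 - (i + (r - 1) - j) = j + (n - 1) - i"
        using i j unfolding N_def by arith+
      then show "transpose_mat ?T $$ (i, j) = toeplitz_mat n r (rv c2) $$ (i, j)"
        using i j unfolding toeplitz_mat_def rv_def by simp
    qed (simp_all add: toeplitz_mat_def)
    ultimately have "col_rank_profile (?T * A - (?T * G) * transpose_mat H)
        = row_rank_profile (transpose_mat M * toeplitz_mat n r (rv c2))"
      unfolding col_rank_profile_def by simp
    also have "\<dots> = row_rank_profile (transpose_mat M)"
      by (rule row_profile_mult[OF MTc toeplitz_carrier good_inj[OF MTc nb[unfolded V2_def]]])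
    finally show ?thesis unfolding col_rank_profile_def .
  qed
  define Good where "Good = {(c1, c2). let T1 = toeplitz_mat n r c1; T2 = toeplitz_mat r n c2;
                          M = A - G * transpose_mat H;
                          P = A * T1 - G * (transpose_mat H * T1);
                          Q = T2 * A - (T2 * G) * transpose_mat H
                      in row_rank_profile P = row_rank_profile M
                         \<and> col_rank_profile Q = col_rank_profile M}"
  have bad_sub: "(\<Omega> \<times> \<Omega>) - Good \<subseteq> (B1 \<times> \<Omega>) \<union> (\<Omega> \<times> B2')"
  proof
    fix x assume x: "x \<in> (\<Omega> \<times> \<Omega>) - Good"
    obtain c1 c2 where xc: "x = (c1, c2)" by fastforce
    have "badv n V1 r c1 \<or> badv n V2 r (rv c2)"
      using x rowgood colgood unfolding xc Good_def M_def by (auto simp: Let_def)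
    then show "x \<in> (B1 \<times> \<Omega>) \<union> (\<Omega> \<times> B2')" using x unfolding xc B1_def B2'_def by auto
  qed
  have finO: "finite \<Omega>" unfolding \<Omega>_def using assms(6) by (simp add: finite_PiE)
  have cardO: "card \<Omega> = card S ^ N" unfolding \<Omega>_def using assms(6) by (simp add: card_PiE)
  have Sp: "card S > 0" using assms(6,7) by (simp add: card_gt_0_iff)
  have B1O: "B1 \<subseteq> \<Omega>" and B2O: "B2' \<subseteq> \<Omega>" unfolding B1_def B2'_def by auto
  have "card ((\<Omega> \<times> \<Omega>) - Good) \<le> card ((B1 \<times> \<Omega>) \<union> (\<Omega> \<times> B2'))"
    by (rule card_mono[OF _ bad_sub]) (use finO B1O B2O finite_subset in blast)
  also have "\<dots> \<le> card (B1 \<times> \<Omega>) + card (\<Omega> \<times> B2')" by (rule card_Un_le)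
  finally have cbad: "card ((\<Omega> \<times> \<Omega>) - Good) \<le> card B1 * card \<Omega> + card \<Omega> * card B2'"
    by (simp add: card_cartesian_product)
  have "card ((\<Omega> \<times> \<Omega>) \<inter> Good) + card ((\<Omega> \<times> \<Omega>) - Good) = card (\<Omega> \<times> \<Omega>)"
    using finO by (metis Diff_Diff_Int card_Diff_subset_Int finite_Diff finite_SigmaI card_Un_disjoint
      Int_Diff_Un Int_Diff_disjoint finite_Int)
  then have h1: "real (card ((\<Omega> \<times> \<Omega>) \<inter> Good)) + real (card ((\<Omega> \<times> \<Omega>) - Good)) = real (card \<Omega>) * real (card \<Omega>)"
    by (simp add: card_cartesian_product) (metis of_nat_add of_nat_mult)
  have h2: "real (card ((\<Omega> \<times> \<Omega>) - Good)) \<le> real (card B1) * real (card \<Omega>) + real (card \<Omega>) * real (card B2')"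
    using cbad by (metis of_nat_le_iff of_nat_add of_nat_mult)
  have key: "real (card ((\<Omega> \<times> \<Omega>) \<inter> Good)) \<ge> real (card \<Omega>) * real (card \<Omega>) - (real (card B1) * real (card \<Omega>) + real (card \<Omega>) * real (card B2'))"
    using h1 h2 by linarith
  have r1: "real (card B1) * real (card S) \<le> real r * real (card \<Omega>)" using cB1 cardO
    by (metis of_nat_le_iff of_nat_mult)
  have r2: "real (card B2') * real (card S) \<le> real r * real (card \<Omega>)" using cB2 cardO cB2'
    by (metis of_nat_le_iff of_nat_mult)
  have Op: "real (card \<Omega>) > 0" using cardO Sp by simp
  have nem: "\<Omega> \<times> \<Omega> \<noteq> {}" using Op by (metis card.empty less_irrefl of_nat_0 Sigma_empty1 times_eq_iff)
  have prob: "measure_pmf.prob (pmf_of_set (\<Omega> \<times> \<Omega>)) Good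
      = real (card ((\<Omega> \<times> \<Omega>) \<inter> Good)) / (real (card \<Omega>) * real (card \<Omega>))"
    using measure_pmf_of_set[OF nem] finO by (simp add: card_cartesian_product)
  have "1 - 2 * real r / real (card S)
      \<le> (real (card \<Omega>) * real (card \<Omega>) - (real (card B1) * real (card \<Omega>) + real (card \<Omega>) * real (card B2')))
         / (real (card \<Omega>) * real (card \<Omega>))"
  proof -
    have "real (card B1) / real (card \<Omega>) \<le> real r / real (card S)"
      using r1 Op Sp by (simp add: divide_simps mult.commute)
    moreover have "real (card B2') / real (card \<Omega>) \<le> real r / real (card S)"
      using r2 Op Sp by (simp add: divide_simps mult.commute)
    moreover have "(real (card \<Omega>) * real (card \<Omega>) - (real (card B1) * real (card \<Omega>) + real (card \<Omega>) * real (card B2')))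
         / (real (card \<Omega>) * real (card \<Omega>)) = 1 - real (card B1) / real (card \<Omega>) - real (card B2') / real (card \<Omega>)"
      using Op by (simp add: field_simps)
    ultimately show ?thesis by simp
  qed
  also have "\<dots> \<le> real (card ((\<Omega> \<times> \<Omega>) \<inter> Good)) / (real (card \<Omega>) * real (card \<Omega>))"
    by (rule divide_right_mono) (use key Op in simp_all)
  finally have fin: "1 - 2 * real r / real (card S) \<le> measure_pmf.prob (pmf_of_set (\<Omega> \<times> \<Omega>)) Good"
    using prob by simp
  then show ?thesis by (simp only: Good_def \<Omega>_def N_def)
qed


end
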